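(* In the binary random graph affiliation mixture model with $Q\ge2$ groups, uniform group priors $\pi_q=1/Q$, and $\alpha\ne\beta$, let $m_1=\mathbb E(X_{12})$ and $m_{41}=\mathbb E(X_{12}X_{23}X_{34}X_{14})$. Then $m_{41}>m_1^4$.
   Context: Random graph mixture model: nodes have i.i.d. latent groups $Z_i\in\{1,\dots,Q\}$ with $\pi_q=\mathbb P(Z_i=q)$; edge variables $X_{ij}$ ($i<j$) are conditionally independent given all $Z$'s, with law of $X_{ij}$ depending only on $(Z_i,Z_j)$. Binary affiliation model: $X_{ij}\in\{0,1\}$ with $\mathbb P(X_{ij}=1\mid Z_i=q,Z_j=l)=\alpha$ if $q=l$ and $=\beta$ if $q\ne l$. *)

theory Defs
  imports "HOL-Probability.Probability"
begin

definition affil :: "real \<Rightarrow> real \<Rightarrow> nat \<Rightarrow> nat \<Rightarrow> real" where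
  "affil \<alpha> \<beta> q l = (if q = l then \<alpha> else \<beta>)"

definition node_pairs :: "nat \<Rightarrow> (nat \<times> nat) set" where
  "node_pairs n = {(i, j). 1 \<le> i \<and> i < j \<and> j \<le> n}"

definition affil_model ::
  "nat \<Rightarrow> nat pmf \<Rightarrow> real \<Rightarrow> real \<Rightarrow> nat \<Rightarrow> ((nat \<Rightarrow> nat) \<times> (nat \<times> nat \<Rightarrow> bool)) pmf" where
  "affil_model Q prior \<alpha> \<beta> n =
     do { Z \<leftarrow> Pi_pmf {1..n} 0 (\<lambda>_. prior);
          X \<leftarrow> Pi_pmf (node_pairs n) False
                 (\<lambda>(i, j). bernoulli_pmf (affil \<alpha> \<beta> (Z i) (Z j)));
          return_pmf (Z, X) }"

definition uniform_groups :: "nat \<Rightarrow> nat pmf" where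
  "uniform_groups Q = pmf_of_set {1..Q}"

end

theory Submission
  imports Defs
begin


lemma exp_bind:
  fixes h :: "'b \<Rightarrow> real"
  assumes "finite (set_pmf p)" "\<And>x. x \<in> set_pmf p \<Longrightarrow> finite (set_pmf (f x))"
  shows "measure_pmf.expectation (bind_pmf p f) h = measure_pmf.expectation p (\<lambda>x. measure_pmf.expectation (f x) h)"
proof -
  have "measure_pmf.expectation (bind_pmf p f) h = (\<Sum>a\<in>set_pmf p. pmf p a *\<^sub>R measure_pmf.expectation (f a) h)"
    using assms by (intro pmf_expectation_bind) auto
  also have "\<dots> = measure_pmf.expectation p (\<lambda>x. measure_pmf.expectation (f x) h)"
    using assms by (subst integral_measure_pmf[of "set_pmf p"]) auto
  finally show ?thesis .
qed

lemma finite_Pi_pmf: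
  assumes "finite A" "\<And>x. x \<in> A \<Longrightarrow> finite (set_pmf (p x))"
  shows "finite (set_pmf (Pi_pmf A d p))"
  using assms by (subst set_Pi_pmf) (auto intro!: finite_PiE_dflt)

lemma exp_pair:
  fixes h :: "_ \<Rightarrow> real"
  assumes "finite (set_pmf A)" "finite (set_pmf B)"
  shows "measure_pmf.expectation (pair_pmf A B) h = measure_pmf.expectation A (\<lambda>a. measure_pmf.expectation B (\<lambda>b. h (a,b)))"
  unfolding pair_pmf_def using assms by (simp add: exp_bind)

lemma exp_Pi_insert:
  fixes h :: "_ \<Rightarrow> real"
  assumes "finite A" "x \<notin> A" "\<And>y. finite (set_pmf (p y))"
  shows "measure_pmf.expectation (Pi_pmf (insert x A) d p) h =
    measure_pmf.expectation (p x) (\<lambda>y. measure_pmf.expectation (Pi_pmf A d p) (\<lambda>f. h (f(x:=y))))"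
  using assms by (simp add: Pi_pmf_insert exp_pair finite_Pi_pmf)

lemma exp_const: "measure_pmf.expectation p (\<lambda>_. c::real) = c"
  by simp

lemma exp_bern: "0 \<le> p \<Longrightarrow> p \<le> 1 \<Longrightarrow> measure_pmf.expectation (bernoulli_pmf p) (\<lambda>b. of_bool b :: real) = p"
  by (subst integral_measure_pmf[of UNIV]) (auto simp: UNIV_bool)


lemma prod_of_bool_set:
  assumes "finite E" shows "(\<Prod>e\<in>E. of_bool (X e) :: real) = of_bool (\<forall>e\<in>E. X e)"
  using assms by (induction E rule: finite_induct) auto

lemma finite_node_pairs: "finite (node_pairs n)"
  unfolding node_pairs_def by (rule finite_subset[of _ "{1..n} \<times> {1..n}"]) auto

lemma inner_exp:
  fixes Z :: "nat \<Rightarrow> nat"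
  assumes E: "E \<subseteq> node_pairs n" and ab: "0 \<le> \<alpha>" "\<alpha> \<le> 1" "0 \<le> \<beta>" "\<beta> \<le> 1"
  shows "measure_pmf.expectation (Pi_pmf (node_pairs n) False
                 (\<lambda>(i, j). bernoulli_pmf (affil \<alpha> \<beta> (Z i) (Z j)))) (\<lambda>X. of_bool (\<forall>e\<in>E. X e) :: real)
       = (\<Prod>(i,j)\<in>E. affil \<alpha> \<beta> (Z i) (Z j))"
proof -
  let ?A = "node_pairs n"
  have fE: "finite E" using E finite_node_pairs finite_subset by blast
  have aff: "0 \<le> affil \<alpha> \<beta> q l \<and> affil \<alpha> \<beta> q l \<le> 1" for q l using ab by (simp add: affil_def)
  have 1: "of_bool (\<forall>e\<in>E. X e) = (\<Prod>e\<in>?A. (\<lambda>e b. if e \<in> E then of_bool b else 1::real) e (X e))" for X :: "nat \<times> nat \<Rightarrow> bool"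
  proof -
    have "(\<Prod>e\<in>?A. (\<lambda>e b. if e \<in> E then of_bool b else 1::real) e (X e)) = (\<Prod>e\<in>?A \<inter> E. of_bool (X e))"
      by (simp add: prod.If_cases finite_node_pairs)
    also have "?A \<inter> E = E" using E by blast
    finally show ?thesis using prod_of_bool_set[OF fE] by simp
  qed
  have "measure_pmf.expectation (Pi_pmf ?A False (\<lambda>(i, j). bernoulli_pmf (affil \<alpha> \<beta> (Z i) (Z j)))) (\<lambda>X. of_bool (\<forall>e\<in>E. X e) :: real)
     = (\<Prod>e\<in>?A. measure_pmf.expectation ((\<lambda>(i, j). bernoulli_pmf (affil \<alpha> \<beta> (Z i) (Z j))) e) (\<lambda>v. (\<lambda>e b. if e \<in> E then of_bool b else 1::real) e v))"
    unfolding 1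
    by (rule expectation_prod_Pi_pmf) (auto simp: finite_node_pairs integrable_measure_pmf_finite)
  also have "\<dots> = (\<Prod>e\<in>?A. if e \<in> E then (case e of (i,j) \<Rightarrow> affil \<alpha> \<beta> (Z i) (Z j)) else 1)"
    by (rule prod.cong) (auto simp: exp_bern aff)
  also have "\<dots> = (\<Prod>e\<in>?A \<inter> E. (case e of (i,j) \<Rightarrow> affil \<alpha> \<beta> (Z i) (Z j)))"
    by (simp add: prod.If_cases finite_node_pairs)
  also have "?A \<inter> E = E" using E by blast
  finally show ?thesis by simp
qed

lemma model_exp:
  assumes E: "E \<subseteq> node_pairs n" and ab: "0 \<le> \<alpha>" "\<alpha> \<le> 1" "0 \<le> \<beta>" "\<beta> \<le> 1" and Q: "Q \<ge> 1"
  shows "measure_pmf.expectation (affil_model Q (uniform_groups Q) \<alpha> \<beta> n) (\<lambda>(Z, X). of_bool (\<forall>e\<in>E. X e) :: real)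
    = measure_pmf.expectation (Pi_pmf {1..n} 0 (\<lambda>_. uniform_groups Q)) (\<lambda>Z. \<Prod>(i,j)\<in>E. affil \<alpha> \<beta> (Z i) (Z j))"
proof -
  have fu: "finite (set_pmf (uniform_groups Q))" using Q by (simp add: uniform_groups_def)
  show ?thesis
    unfolding affil_model_def
    apply (subst exp_bind)
      apply (simp add: finite_Pi_pmf fu)
     apply (simp add: finite_Pi_pmf finite_node_pairs split: prod.splits)
    apply (subst exp_bind)
      apply (simp add: finite_Pi_pmf finite_node_pairs split: prod.splits)
     apply simp
    apply (simp add: inner_exp[OF E ab])
    done
qed



lemma affil_sym: "affil a b q l = affil a b l q" by (auto simp: affil_def)

lemma sumaa:
  fixes a b :: real
  assumes "finite S" "q \<in> S" "l \<in> S"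
  shows "(\<Sum>z\<in>S. affil a b q z * affil a b z l) = real (card S) * b^2 + 2*b*(a-b) + (a-b)^2 * of_bool (q=l)"
proof -
  have e: "affil a b q z * affil a b z l = b^2 + b*(a-b) * of_bool (z = l) + b*(a-b) * of_bool (z = q) + (a-b)^2 * of_bool (q=l) * of_bool (z = q)" for z
    by (auto simp: affil_def power2_eq_square algebra_simps)
  show ?thesis unfolding e using assms by (simp add: sum.distrib sum_distrib_left[symmetric])
qed

lemma suma:
  fixes a b :: real
  assumes "finite S" "q \<in> S"
  shows "(\<Sum>z\<in>S. affil a b q z) = real (card S) * b + (a-b)"
proof -
  have e: "affil a b q z = b + (a-b) * of_bool (z = q)" for z
    by (auto simp: affil_def)
  show ?thesis unfolding e using assms by (simp add: sum.distrib sum_distrib_left[symmetric])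
qed

lemma T4:
  fixes a b :: real
  assumes S: "finite S"
  defines "c \<equiv> real (card S) * b^2 + 2*b*(a-b)" and "d \<equiv> (a-b)^2"
  shows "(\<Sum>y1\<in>S. \<Sum>y2\<in>S. \<Sum>y3\<in>S. \<Sum>y4\<in>S. affil a b y1 y2 * affil a b y2 y3 * affil a b y3 y4 * affil a b y1 y4)
    = real (card S)^2 * c^2 + real (card S) * (2*c*d + d^2)"
proof -
  let ?a = "affil a b"
  let ?B = "\<lambda>q l. c + d * of_bool (q = l)"
  have B: "q \<in> S \<Longrightarrow> l \<in> S \<Longrightarrow> (\<Sum>z\<in>S. ?a q z * ?a z l) = ?B q l" for q l
    using sumaa[OF S] unfolding c_def d_def by simp
  have "(\<Sum>y1\<in>S. \<Sum>y2\<in>S. \<Sum>y3\<in>S. \<Sum>y4\<in>S. ?a y1 y2 * ?a y2 y3 * ?a y3 y4 * ?a y1 y4)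
      = (\<Sum>y1\<in>S. \<Sum>y2\<in>S. \<Sum>y3\<in>S. ?a y1 y2 * ?a y2 y3 * ?B y3 y1)"
  proof (intro sum.cong refl)
    fix y1 y2 y3 assume h: "y1 \<in> S" "y3 \<in> S"
    have "(\<Sum>y4\<in>S. ?a y1 y2 * ?a y2 y3 * ?a y3 y4 * ?a y1 y4) = ?a y1 y2 * ?a y2 y3 * (\<Sum>y4\<in>S. ?a y3 y4 * ?a y4 y1)"
      by (simp add: sum_distrib_left mult.assoc affil_sym[of a b y1])
    then show "(\<Sum>y4\<in>S. ?a y1 y2 * ?a y2 y3 * ?a y3 y4 * ?a y1 y4) = ?a y1 y2 * ?a y2 y3 * ?B y3 y1"
      using B h by simp
  qed
  also have "\<dots> = (\<Sum>y1\<in>S. \<Sum>y3\<in>S. ?B y3 y1 * (\<Sum>y2\<in>S. ?a y1 y2 * ?a y2 y3))"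
    by (subst sum.swap) (simp add: sum_distrib_left mult_ac)
  also have "\<dots> = (\<Sum>y1\<in>S. \<Sum>y3\<in>S. c^2 + (2*c*d + d^2) * of_bool (y3 = y1))"
    by (intro sum.cong refl) (auto simp: B power2_eq_square algebra_simps)
  also have "\<dots> = real (card S)^2 * c^2 + real (card S) * (2*c*d + d^2)"
    using S by (simp add: sum.distrib sum_distrib_left[symmetric] power2_eq_square algebra_simps)
  finally show ?thesis .
qed


lemma expZ4:
  fixes g :: "nat \<Rightarrow> nat \<Rightarrow> nat \<Rightarrow> nat \<Rightarrow> real" and n Q :: nat
  assumes n: "n \<ge> 4" and Q: "Q \<ge> 1"
  shows "measure_pmf.expectation (Pi_pmf {1..n} 0 (\<lambda>_. uniform_groups Q)) (\<lambda>Z. g (Z 1) (Z 2) (Z 3) (Z 4))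
    = (\<Sum>y1\<in>{1..Q}. \<Sum>y2\<in>{1..Q}. \<Sum>y3\<in>{1..Q}. \<Sum>y4\<in>{1..Q}. g y1 y2 y3 y4) / real Q ^ 4"
proof -
  have N: "{1..n} = insert 1 (insert 2 (insert 3 (insert 4 {5..n})))" using n by auto
  have fu: "finite (set_pmf (uniform_groups Q))" using Q by (simp add: uniform_groups_def)
  have U: "measure_pmf.expectation (uniform_groups Q) f = sum f {1..Q} / real Q" for f :: "nat \<Rightarrow> real"
    using Q by (simp add: uniform_groups_def integral_pmf_of_set)
  show ?thesis unfolding N
    by (simp add: exp_Pi_insert fu U sum_divide_distrib[symmetric] power4_eq_xxxx mult.assoc)
qed

theorem lemma4:
  fixes Q n :: nat and \<alpha> \<beta> :: real
  assumes "Q \<ge> 2" and "n \<ge> 4"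
    and "0 \<le> \<alpha>" "\<alpha> \<le> 1" "0 \<le> \<beta>" "\<beta> \<le> 1"
    and "\<alpha> \<noteq> \<beta>"
  shows "measure_pmf.expectation (affil_model Q (uniform_groups Q) \<alpha> \<beta> n)
           (\<lambda>(Z, X). of_bool (X (1,2) \<and> X (2,3) \<and> X (3,4) \<and> X (1,4)) :: real)
       > (measure_pmf.expectation (affil_model Q (uniform_groups Q) \<alpha> \<beta> n)
           (\<lambda>(Z, X). of_bool (X (1,2)) :: real)) ^ 4"
proof -
  note ab = assms(3-6)
  have Q1: "Q \<ge> 1" using assms(1) by simp
  let ?S = "{1..Q::nat}"
  let ?a = "affil \<alpha> \<beta>"
  define c where "c = real Q * \<beta>^2 + 2*\<beta>*(\<alpha>-\<beta>)"
  define d where "d = (\<alpha>-\<beta>)^2"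
  let ?E4 = "{(1::nat,2::nat),(2,3),(3,4),(1,4)}"
  have E4: "?E4 \<subseteq> node_pairs n" using assms(2) by (auto simp: node_pairs_def)
  have E1: "{(1::nat,2::nat)} \<subseteq> node_pairs n" using assms(2) by (auto simp: node_pairs_def)
  have f4: "(\<lambda>(Z, X). of_bool (X (1,2) \<and> X (2,3) \<and> X (3,4) \<and> X (1,4)) :: real)
      = (\<lambda>(Z, X). of_bool (\<forall>e\<in>?E4. X e))" by auto
  have f1: "(\<lambda>(Z, X). of_bool (X (1,2)) :: real) = (\<lambda>(Z, X). of_bool (\<forall>e\<in>{(1::nat,2::nat)}. X e))" by auto
  have p4: "(\<lambda>Z. \<Prod>(i,j)\<in>?E4. ?a (Z i) (Z j)) = (\<lambda>Z. (\<lambda>y1 y2 y3 y4. ?a y1 y2 * ?a y2 y3 * ?a y3 y4 * ?a y1 y4) (Z 1) (Z 2) (Z 3) (Z 4))"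
    by (simp add: mult_ac)
  have p1: "(\<lambda>Z. \<Prod>(i,j)\<in>{(1::nat,2::nat)}. ?a (Z i) (Z j)) = (\<lambda>Z. (\<lambda>y1 y2 y3 y4. ?a y1 y2) (Z 1) (Z 2) (Z 3) (Z 4))"
    by simp
  have m41: "measure_pmf.expectation (affil_model Q (uniform_groups Q) \<alpha> \<beta> n)
           (\<lambda>(Z, X). of_bool (X (1,2) \<and> X (2,3) \<and> X (3,4) \<and> X (1,4)) :: real)
      = (real Q^2 * c^2 + real Q * (2*c*d + d^2)) / real Q ^ 4"
    unfolding f4 model_exp[OF E4 ab Q1] p4
    using expZ4[OF assms(2) Q1, of "\<lambda>y1 y2 y3 y4. ?a y1 y2 * ?a y2 y3 * ?a y3 y4 * ?a y1 y4"]
      T4[of ?S \<alpha> \<beta>] by (simp add: c_def d_def)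
  have s1: "(\<Sum>y1\<in>?S. \<Sum>y2\<in>?S. \<Sum>y3\<in>?S. \<Sum>y4\<in>?S. ?a y1 y2) = real Q * real Q * (real Q * (real Q * \<beta> + (\<alpha>-\<beta>)))"
  proof -
    have "(\<Sum>y1\<in>?S. \<Sum>y2\<in>?S. \<Sum>y3\<in>?S. \<Sum>y4\<in>?S. ?a y1 y2) = (\<Sum>y1\<in>?S. real Q * real Q * (\<Sum>y2\<in>?S. ?a y1 y2))"
      by (simp add: sum_distrib_left mult.assoc)
    also have "\<dots> = (\<Sum>y1\<in>?S. real Q * real Q * (real Q * \<beta> + (\<alpha>-\<beta>)))"
      by (intro sum.cong refl) (simp add: suma)
    finally show ?thesis by simp
  qed
  have m1: "measure_pmf.expectation (affil_model Q (uniform_groups Q) \<alpha> \<beta> n)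
           (\<lambda>(Z, X). of_bool (X (1,2)) :: real) = (real Q * \<beta> + (\<alpha>-\<beta>)) / real Q"
    unfolding f1 model_exp[OF E1 ab Q1] p1
    using expZ4[OF assms(2) Q1, of "\<lambda>y1 y2 y3 y4. ?a y1 y2"] s1
    using Q1 by (simp add: power4_eq_xxxx)
  have Qp: "real Q > 1" using assms(1) by simp
  have dp: "d > 0" using assms(7) by (simp add: d_def)
  have key: "(real Q * \<beta> + (\<alpha>-\<beta>))^2 = real Q * c + d" by (simp add: c_def d_def power2_eq_square algebra_simps)
  have "((real Q * \<beta> + (\<alpha>-\<beta>)) / real Q)^4 = (real Q * c + d)^2 / real Q ^ 4"
    by (simp add: power_divide key[symmetric] flip: power_mult)
  also have "\<dots> < (real Q^2 * c^2 + real Q * (2*c*d + d^2)) / real Q ^ 4"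
  proof (rule divide_strict_right_mono)
    have "(real Q^2 * c^2 + real Q * (2*c*d + d^2)) - (real Q * c + d)^2 = (real Q - 1) * d^2"
      by (simp add: power2_eq_square algebra_simps)
    moreover have "(real Q - 1) * d^2 > 0" using Qp dp by simp
    ultimately show "(real Q * c + d)^2 < real Q^2 * c^2 + real Q * (2*c*d + d^2)" by linarith
  qed (use Qp in simp)
  finally show ?thesis unfolding m41 m1 .
qed

end
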